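(* Let $U$ be a two-phase quantum walk with one defect. Then $U$ is unitary equivalent to \begin{align*} U_{r_+,r_-,r_0,\mu_1,\mu_2,\mu_3}={}&|e_1^{-1}\rangle\langle r_0e_1^0+e^{i\mu_1}s_0e_2^0|+|e_2^{1}\rangle\langle -e^{i\mu_2}s_0e_1^0+e^{i(\mu_1+\mu_2)}r_0e_2^0|\\ &+\sum_{n\ge1}|e_1^{n-1}\rangle\langle r_+e_1^n+s_+e_2^n|+|e_2^{n+1}\rangle\langle -e^{i\mu_3}s_+e_1^n+e^{i\mu_3}r_+e_2^n|\\ &+\sum_{n\le-1}|e_1^{n-1}\rangle\langle r_-e_1^n+s_-e_2^n|+|e_2^{n+1}\rangle\langle -s_-e_1^n+r_-e_2^n| \end{align*} for some $0\le r_+,r_-,r_0\le1$ and $\mu_1,\mu_2,\mu_3\in\mathbb R$, where $s_\varepsilon=\sqrt{1-r_\varepsilon^2}$ for $\varepsilon=+,-,0$.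
   Context: Let $\mathcal H_n=\mathbb C^2$ for $n\in\mathbb Z$, $\mathcal H=\bigoplus_{n\in\mathbb Z}\mathcal H_n$, $P_n$ the orthogonal projection onto $\mathcal H_n$, and $\{e_1^n,e_2^n\}$ the standard basis of $\mathcal H_n$; each $\mathcal H_n$ is identified with $\mathbb C^2$. Dirac notation: $|x\rangle\langle y|$ is the operator $z\mapsto\langle y,z\rangle x$ (inner product conjugate-linear in the first argument). A one-dimensional quantum walk is a unitary $U$ on $\mathcal H$ with $\operatorname{rank}(P_nUP_m)=1$ if $m=n\pm1$ and $0$ otherwise. Every such $U$ can be written as $U=\sum_{n\in\mathbb Z}|\xi_{n-1,n}\rangle\langle\zeta_{n-1,n}|+|\xi_{n+1,n}\rangle\langle\zeta_{n+1,n}|$, where $\{\xi_{n,n+1},\xi_{n+1,n}\}_{n\in\mathbb Z}$ and $\{\zeta_{n,n+1},\zeta_{n+1,n}\}_{n\in\mathbb Z}$ are orthonormal bases of $\mathcal H$ with $\xi_{n,n+1},\zeta_{n+1,n}\in\mathcal H_n$ and $\xi_{n+1,n},\zeta_{n,n+1}\in\mathcal H_{n+1}$. $U$ is a two-phase quantum walk with one defect if it has such a representation for which there exist $\xi_1^\pm,\xi_2^\pm,\zeta_1^\pm,\zeta_2^\pm\in\mathbb C^2$ with $\xi_{n,n+1}=\xi_1^+$, $\xi_{n,n-1}=\xi_2^+$, $\zeta_{n-1,n}=\zeta_1^+$, $\zeta_{n+1,n}=\zeta_2^+$ for all $n\ge1$, and $\xi_{n,n+1}=\xi_1^-$, $\xi_{n,n-1}=\xi_2^-$,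 $\zeta_{n-1,n}=\zeta_1^-$, $\zeta_{n+1,n}=\zeta_2^-$ for all $n\le-1$. Since $U$ and $e^{i\lambda}U$ are identified, unitaries $U_1,U_2$ on $\mathcal H$ are called unitary equivalent if there exist $\lambda\in\mathbb R$ and a unitary $W=\bigoplus_{n}W_n$ ($W_n$ unitary on $\mathcal H_n$) with $e^{i\lambda}WU_1W^*=U_2$. *)

theory Defs
  imports "HOL-Analysis.Analysis"
begin

text \<open>Each fibre H_n = C^2 is modelled by pairs of complex numbers; a vector of
  H = direct sum over n in Z of H_n is a function from int to such pairs.\<close>

type_synonym site = "complex \<times> complex"
type_synonym state = "int \<Rightarrow> site"

definition sadd :: "site \<Rightarrow> site \<Rightarrow> site" where
  "sadd x y = (fst x + fst y, snd x + snd y)"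

definition ssc :: "complex \<Rightarrow> site \<Rightarrow> site" where
  "ssc c x = (c * fst x, c * snd x)"

definition cinner :: "site \<Rightarrow> site \<Rightarrow> complex" where
  "cinner x y = cnj (fst x) * fst y + cnj (snd x) * snd y"

definition e1 :: site where "e1 = (1, 0)"
definition e2 :: site where "e2 = (0, 1)"

definition onb2 :: "site \<Rightarrow> site \<Rightarrow> bool" where
  "onb2 a b \<longleftrightarrow> cinner a a = 1 \<and> cinner b b = 1 \<and> cinner a b = 0"

definition ell2 :: "state set" where
  "ell2 = {f. (\<lambda>n. (cmod (fst (f n)))\<^sup>2 + (cmod (snd (f n)))\<^sup>2) summable_on UNIV}"

definition Hinner :: "state \<Rightarrow> state \<Rightarrow> complex" where
  "Hinner f g = (\<Sum>\<^sub>\<infinity>n. cinner (f n) (g n))"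

definition unitary_H :: "(state \<Rightarrow> state) \<Rightarrow> bool" where
  "unitary_H U \<longleftrightarrow>
     (\<forall>f\<in>ell2. U f \<in> ell2) \<and> (\<forall>g\<in>ell2. \<exists>f\<in>ell2. U f = g) \<and>
     (\<forall>f\<in>ell2. \<forall>g\<in>ell2. \<forall>c.
        U (\<lambda>n. sadd (ssc c (f n)) (g n)) = (\<lambda>n. sadd (ssc c (U f n)) (U g n))) \<and>
     (\<forall>f\<in>ell2. \<forall>g\<in>ell2. Hinner (U f) (U g) = Hinner f g)"

definition delta :: "int \<Rightarrow> site \<Rightarrow> state" where
  "delta m v = (\<lambda>k. if k = m then v else (0, 0))"

definition rank_one :: "(site \<Rightarrow> site) \<Rightarrow> bool" where
  "rank_one g \<longleftrightarrow> (\<exists>w. w \<noteq> (0, 0) \<and> range g = {ssc c w | c. True})"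

text \<open>One-dimensional quantum walk: rank (P_n U P_m) = 1 if m = n +- 1, and 0 otherwise.
  The operator P_n U P_m is identified with the block map v |-> (U (delta m v)) n.\<close>
definition quantum_walk :: "(state \<Rightarrow> state) \<Rightarrow> bool" where
  "quantum_walk U \<longleftrightarrow> unitary_H U \<and>
     (\<forall>n m. if m = n + 1 \<or> m = n - 1 then rank_one (\<lambda>v. U (delta m v) n)
            else (\<forall>v. U (delta m v) n = (0, 0)))"

text \<open>The operator  sum_n |xi_{n-1,n}><zeta_{n-1,n}| + |xi_{n+1,n}><zeta_{n+1,n}|
  with the fibre-wise parametrisation
  A k = xi_{k,k+1}, B k = xi_{k,k-1}  (both in H_k),
  C k = zeta_{k-1,k}, D k = zeta_{k+1,k}  (both in H_k).\<close>
definition walk_repr :: "(int \<Rightarrow> site) \<Rightarrow> (int \<Rightarrow> site) \<Rightarrow> (int \<Rightarrow> site) \<Rightarrow> (int \<Rightarrow> site)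
    \<Rightarrow> state \<Rightarrow> state" where
  "walk_repr A B C D f = (\<lambda>k. sadd (ssc (cinner (C (k + 1)) (f (k + 1))) (A k))
                                   (ssc (cinner (D (k - 1)) (f (k - 1))) (B k)))"

definition two_phase_one_defect :: "(state \<Rightarrow> state) \<Rightarrow> bool" where
  "two_phase_one_defect U \<longleftrightarrow> quantum_walk U \<and>
     (\<exists>A B C D. (\<forall>n. onb2 (A n) (B n) \<and> onb2 (C n) (D n)) \<and>
        (\<forall>f\<in>ell2. U f = walk_repr A B C D f) \<and>
        (\<exists>xi1p xi2p ze1p ze2p xi1m xi2m ze1m ze2m. \<forall>n::int.
           (n \<ge> 1 \<longrightarrow> A n = xi1p \<and> B n = xi2p \<and> C n = ze1p \<and> D n = ze2p) \<and>
           (n \<le> -1 \<longrightarrow> A n = xi1m \<and> B n = xi2m \<and> C n = ze1m \<and> D n = ze2m)))"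

text \<open>Unitary on C^2 (linear isometry of C^2, hence bijective).\<close>
definition unitary2 :: "(site \<Rightarrow> site) \<Rightarrow> bool" where
  "unitary2 w \<longleftrightarrow> (\<forall>c x y. w (sadd (ssc c x) y) = sadd (ssc c (w x)) (w y)) \<and>
                   (\<forall>x y. cinner (w x) (w y) = cinner x y)"

definition unitary_equiv :: "(state \<Rightarrow> state) \<Rightarrow> (state \<Rightarrow> state) \<Rightarrow> bool" where
  "unitary_equiv U1 U2 \<longleftrightarrow>
     (\<exists>(lam::real) (W::int \<Rightarrow> site \<Rightarrow> site). (\<forall>n. unitary2 (W n)) \<and>
        (\<forall>f\<in>ell2. (\<lambda>n. ssc (exp (\<i> * complex_of_real lam))
                           (W n (U1 (\<lambda>m. inv (W m) (f m)) n))) = U2 f))"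

definition sval :: "real \<Rightarrow> real" where "sval r = sqrt (1 - r\<^sup>2)"

text \<open>Bra vectors of the normal form: the operator sends f to
  sum_n e_1^{n-1} <v_n, f n> + e_2^{n+1} <w_n, f n>.\<close>
definition vref :: "real \<Rightarrow> real \<Rightarrow> real \<Rightarrow> real \<Rightarrow> int \<Rightarrow> site" where
  "vref rp rm r0 mu1 n =
     (if n = 0 then (complex_of_real r0, exp (\<i> * complex_of_real mu1) * complex_of_real (sval r0))
      else if n \<ge> 1 then (complex_of_real rp, complex_of_real (sval rp))
      else (complex_of_real rm, complex_of_real (sval rm)))"

definition wref :: "real \<Rightarrow> real \<Rightarrow> real \<Rightarrow> real \<Rightarrow> real \<Rightarrow> real \<Rightarrow> int \<Rightarrow> site" where
  "wref rp rm r0 mu1 mu2 mu3 n =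
     (if n = 0 then (- exp (\<i> * complex_of_real mu2) * complex_of_real (sval r0),
                     exp (\<i> * complex_of_real (mu1 + mu2)) * complex_of_real r0)
      else if n \<ge> 1 then (- exp (\<i> * complex_of_real mu3) * complex_of_real (sval rp),
                          exp (\<i> * complex_of_real mu3) * complex_of_real rp)
      else (- complex_of_real (sval rm), complex_of_real rm))"

definition Uref :: "real \<Rightarrow> real \<Rightarrow> real \<Rightarrow> real \<Rightarrow> real \<Rightarrow> real \<Rightarrow> state \<Rightarrow> state" where
  "Uref rp rm r0 mu1 mu2 mu3 f =
     (\<lambda>k. sadd (ssc (cinner (vref rp rm r0 mu1 (k + 1)) (f (k + 1))) e1)
               (ssc (cinner (wref rp rm r0 mu1 mu2 mu3 (k - 1)) (f (k - 1))) e2))"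

end

theory Submission
  imports Defs
begin

lemma complete2:
  assumes "onb2 a b"
  shows "sadd (ssc (cinner a x) a) (ssc (cinner b x) b) = x"
proof -
  obtain a1 a2 b1 b2 x1 x2 where p: "a = (a1,a2)" "b = (b1,b2)" "x = (x1,x2)" by (cases a, cases b, cases x) auto
  have h1: "cnj a1 * a1 + cnj a2 * a2 = 1" and h2: "cnj b1 * b1 + cnj b2 * b2 = 1"
   and h3: "cnj a1 * b1 + cnj a2 * b2 = 0"
    using assms by (auto simp: onb2_def cinner_def p)
  have h4: "a1 * cnj b1 + a2 * cnj b2 = 0" using arg_cong[OF h3, of cnj] by simp
  have "(cnj a1 * x1 + cnj a2 * x2) * a1 + (cnj b1 * x1 + cnj b2 * x2) * b1 = x1"
    using h1 h2 h3 h4 by algebra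
  moreover have "(cnj a1 * x1 + cnj a2 * x2) * a2 + (cnj b1 * x1 + cnj b2 * x2) * b2 = x2"
    using h1 h2 h3 h4 by algebra
  ultimately show ?thesis by (simp add: p sadd_def ssc_def cinner_def)
qed


lemma cinner_lin: "cinner x (sadd (ssc c u) w) = c * cinner x u + cinner x w"
  by (simp add: cinner_def sadd_def ssc_def algebra_simps)

lemma cinner_lin2: "cinner x (sadd (ssc c u) (ssc d w)) = c * cinner x u + d * cinner x w"
  by (simp add: cinner_def sadd_def ssc_def algebra_simps)

lemma cinner_sym: "cinner y x = cnj (cinner x y)"
  by (simp add: cinner_def)

lemma parseval:
  assumes "onb2 a b"
  shows "cinner x y = cnj (cinner a x) * cinner a y + cnj (cinner b x) * cinner b y"
proof -
  have "cinner x y = cinner x (sadd (ssc (cinner a y) a) (ssc (cinner b y) b))"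
    using complete2[OF assms, of y] by simp
  also have "\<dots> = cinner a y * cinner x a + cinner b y * cinner x b"
    by (simp add: cinner_def sadd_def ssc_def algebra_simps)
  finally show ?thesis by (simp add: cinner_sym[of x a] cinner_sym[of x b] mult.commute)
qed

definition Wf :: "real \<Rightarrow> real \<Rightarrow> site \<Rightarrow> site \<Rightarrow> site \<Rightarrow> site" where
  "Wf p q a b x = (cis p * cinner a x, cis q * cinner b x)"
definition Wi :: "real \<Rightarrow> real \<Rightarrow> site \<Rightarrow> site \<Rightarrow> site \<Rightarrow> site" where
  "Wi p q a b y = sadd (ssc (cis (-p) * fst y) a) (ssc (cis (-q) * snd y) b)"

lemma Wi_Wf: "onb2 a b \<Longrightarrow> Wi p q a b (Wf p q a b x) = x"
proof -
  assume o: "onb2 a b"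
  have "cis (-p) * cis p = 1" "cis (-q) * cis q = 1" by (simp_all add: cis_mult)
  then show ?thesis using complete2[OF o, of x]
    by (simp add: Wi_def Wf_def mult.assoc[symmetric])
qed

lemma Wf_Wi: assumes "onb2 a b" shows "Wf p q a b (Wi p q a b y) = y"
proof -
  have o: "cinner a a = 1" "cinner b b = 1" "cinner a b = 0" "cinner b a = 0"
    using assms by (auto simp: onb2_def cinner_sym[of b a])
  have f: "cinner a (Wi p q a b y) = cis (-p) * fst y" "cinner b (Wi p q a b y) = cis (-q) * snd y"
    unfolding Wi_def cinner_lin2 using o by simp_all
  have h: "cis p * cis (-p) = 1" "cis q * cis (-q) = 1" by (simp_all add: cis_mult)
  show ?thesis unfolding Wf_def f mult.assoc[symmetric] h by simp
qed

lemma cisu: "cnj (cis p * u) * (cis p * v) = cnj u * v"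
proof -
  have h: "cnj (cis p) * cis p = 1" by (simp add: cis_cnj cis_mult)
  have "cnj (cis p * u) * (cis p * v) = (cnj (cis p) * cis p) * (cnj u * v)" by (simp add: ac_simps)
  then show ?thesis using h by simp
qed

lemma Wf_inner: assumes "onb2 a b" shows "cinner (Wf p q a b x) (Wf p q a b y) = cinner x y"
proof -
  have "cinner (Wf p q a b x) (Wf p q a b y) = cnj (cinner a x) * cinner a y + cnj (cinner b x) * cinner b y"
    by (simp only: Wf_def cinner_def fst_conv snd_conv cisu)
  then show ?thesis using parseval[OF assms, of x y] by simp
qed

lemma Wf_unitary: assumes "onb2 a b" shows "unitary2 (Wf p q a b)"
  unfolding unitary2_def
  by (simp add: Wf_inner[OF assms]) (simp add: Wf_def cinner_def sadd_def ssc_def algebra_simps)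

lemma Wf_inv: assumes "onb2 a b" shows "inv (Wf p q a b) = Wi p q a b"
  by (rule inv_equality) (simp_all add: Wi_Wf Wf_Wi assms)

lemma normsq: "(cmod (fst v))\<^sup>2 + (cmod (snd v))\<^sup>2 = Re (cinner v v)"
  by (cases v) (simp add: cinner_def cmod_power2, simp add: power2_eq_square)

lemma cis_shuffle: "cis p * (c * cis q) = c * cis (p + q)"
  by (simp add: cis_mult[symmetric] algebra_simps)


lemma orth2:
  assumes h1: "cnj a * a + cnj b * b = 1" and h2: "cnj x * x + cnj y * y = 1"
    and h3: "cnj a * x + cnj b * y = 0"
  defines "t \<equiv> a * y - b * x"
  shows "x = - t * cnj b" "y = t * cnj a" "cmod t = 1"
proof -
  show e1: "x = - t * cnj b" unfolding t_def using h1 h3 by algebra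
  show e2: "y = t * cnj a" unfolding t_def using h1 h3 by algebra
  have "cnj t * t = 1"
    using h2 h1 unfolding e1 e2 by (simp add: algebra_simps) algebra
  then have "(cmod t)^2 = 1" using complex_norm_square[of t]
    by (metis mult.commute of_real_eq_1_iff)
  then show "cmod t = 1" using norm_ge_zero[of t] by (auto simp: power2_eq_1_iff)
qed

lemma polar: "z = complex_of_real (cmod z) * cis (Arg z)"
  using rcis_cmod_Arg[of z] by (simp add: rcis_def)

lemma polar_unit: "cmod z = 1 \<Longrightarrow> z = cis (Arg z)"
  using polar[of z] by simp

lemma cmod_sq: "cnj a * a + cnj b * b = 1 \<Longrightarrow> cmod b = sqrt (1 - (cmod a)\<^sup>2)"
proof -
  assume h: "cnj a * a + cnj b * b = 1"
  have "complex_of_real ((cmod a)^2 + (cmod b)^2) = 1"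
    using h complex_norm_square[of a] complex_norm_square[of b]
    by (simp add: mult.commute)
  then have "(cmod a)^2 + (cmod b)^2 = 1" using of_real_eq_1_iff by blast
  then show ?thesis by (simp add: real_sqrt_unique[symmetric])
qed

lemma cmod_le1: "cnj a * a + cnj b * b = 1 \<Longrightarrow> cmod a \<le> 1"
proof -
  assume h: "cnj a * a + cnj b * b = 1"
  have "complex_of_real ((cmod a)^2 + (cmod b)^2) = 1"
    using h complex_norm_square[of a] complex_norm_square[of b]
    by (simp add: mult.commute)
  then have "(cmod a)^2 + (cmod b)^2 = 1" using of_real_eq_1_iff by blast
  then have "(cmod a)^2 \<le> 1^2" by (simp add: add_nonneg_eq_0_iff) (smt (verit) zero_le_power2)
  then show ?thesis using power2_le_imp_le[of "cmod a" 1] by simp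
qed


lemma Wf_comb: assumes "onb2 a b"
  shows "Wf p q a b (sadd (ssc c a) (ssc d b)) = (cis p * c, cis q * d)"
proof -
  have o: "cinner a a = 1" "cinner b b = 1" "cinner a b = 0" "cinner b a = 0"
    using assms by (auto simp: onb2_def cinner_sym[of b a])
  show ?thesis by (simp add: Wf_def cinner_lin2 o)
qed


lemma combine:
  "cis l * (cis p * (cnj (cis q * z) * w + cnj (cis q' * z') * w')) =
   cnj (cis (-l - p + q) * z) * w + cnj (cis (-l - p + q') * z') * w'"
proof -
  have "cnj (cis (-l - p + q)) = cis l * cis p * cnj (cis q)"
    unfolding cis_cnj cis_mult by (rule arg_cong[where f=cis]) simp
  moreover have "cnj (cis (-l - p + q')) = cis l * cis p * cnj (cis q')"
    unfolding cis_cnj cis_mult by (rule arg_cong[where f=cis]) simp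
  ultimately show ?thesis by (simp add: algebra_simps)
qed

lemma combine1:
  "cis l * (cis p * cinner (cis q * z, cis q' * z') v) =
   cinner (cis (-l - p + q) * z, cis (-l - p + q') * z') v"
  using combine[of l p q z "fst v" q' z' "snd v"] by (simp add: cinner_def)


theorem theorem2p7:
  fixes U :: "state \<Rightarrow> state"
  assumes "two_phase_one_defect U"
  shows "\<exists>rp rm r0 mu1 mu2 mu3.
           0 \<le> rp \<and> rp \<le> 1 \<and> 0 \<le> rm \<and> rm \<le> 1 \<and> 0 \<le> r0 \<and> r0 \<le> 1 \<and>
           unitary_equiv U (Uref rp rm r0 mu1 mu2 mu3)"
proof -
  from assms obtain A B C D where onb: "\<And>n. onb2 (A n) (B n) \<and> onb2 (C n) (D n)"
    and UW: "\<And>f. f \<in> ell2 \<Longrightarrow> U f = walk_repr A B C D f"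
    and "\<exists>xi1p xi2p ze1p ze2p xi1m xi2m ze1m ze2m. \<forall>n::int.
           (n \<ge> 1 \<longrightarrow> A n = xi1p \<and> B n = xi2p \<and> C n = ze1p \<and> D n = ze2p) \<and>
           (n \<le> -1 \<longrightarrow> A n = xi1m \<and> B n = xi2m \<and> C n = ze1m \<and> D n = ze2m)"
    unfolding two_phase_one_defect_def by blast
  then obtain xi1p xi2p ze1p ze2p xi1m xi2m ze1m ze2m where cst: "\<forall>n::int.
           (n \<ge> 1 \<longrightarrow> A n = xi1p \<and> B n = xi2p \<and> C n = ze1p \<and> D n = ze2p) \<and>
           (n \<le> -1 \<longrightarrow> A n = xi1m \<and> B n = xi2m \<and> C n = ze1m \<and> D n = ze2m)" by blast
  have cp: "A n = A 1 \<and> B n = B 1 \<and> C n = C 1 \<and> D n = D 1" if "n \<ge> 1" for n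
    using cst[rule_format, of n] cst[rule_format, of 1] that by auto
  have cm: "A n = A (-1) \<and> B n = B (-1) \<and> C n = C (-1) \<and> D n = D (-1)" if "n \<le> -1" for n
    using cst[rule_format, of n] cst[rule_format, of "-1"] that by auto
  define a where "a n = cinner (A n) (C n)" for n
  define b where "b n = cinner (B n) (C n)" for n
  define x where "x n = cinner (A n) (D n)" for n
  define y where "y n = cinner (B n) (D n)" for n
  have pars: "cnj (a n) * a n + cnj (b n) * b n = 1 \<and> cnj (x n) * x n + cnj (y n) * y n = 1
      \<and> cnj (a n) * x n + cnj (b n) * y n = 0" for n
  proof -
    have o: "cinner (C n) (C n) = 1" "cinner (D n) (D n) = 1" "cinner (C n) (D n) = 0"
      using onb[of n] by (auto simp: onb2_def)
    show ?thesis using o parseval[of "A n" "B n" "C n" "C n"] parseval[of "A n" "B n" "D n" "D n"]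
       parseval[of "A n" "B n" "C n" "D n"] onb[of n]
      by (simp add: a_def b_def x_def y_def)
  qed
  define t where "t n = a n * y n - b n * x n" for n
  have tx: "x n = - t n * cnj (b n)" "y n = t n * cnj (a n)" "cmod (t n) = 1" for n
    using orth2[of "a n" "b n" "x n" "y n"] pars[of n] by (simp_all add: t_def)
  define r where "r n = cmod (a n)" for n
  define ua where "ua n = Arg (a n)" for n
  define pb where "pb n = Arg (b n)" for n
  define tau where "tau n = Arg (t n)" for n
  have r01: "0 \<le> r n \<and> r n \<le> 1" for n
    using cmod_le1[of "a n" "b n"] pars[of n] by (simp add: r_def)
  have adec: "a n = of_real (r n) * cis (ua n)" for n
    using polar[of "a n"] by (simp add: r_def ua_def)
  have bdec: "b n = of_real (sval (r n)) * cis (pb n)" for n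
    using polar[of "b n"] cmod_sq[of "a n" "b n"] pars[of n] by (simp add: r_def pb_def sval_def)
  have tdec: "t n = cis (tau n)" for n
    using polar_unit[of "t n"] tx(3)[of n] by (simp add: tau_def)
  have xdec: "x n = - (of_real (sval (r n)) * cis (tau n - pb n))" for n
    using tx(1)[of n] unfolding tdec bdec by (simp add: cis_cnj cis_mult[symmetric] algebra_simps) (simp add: cis_mult)
  have ydec: "y n = of_real (r n) * cis (tau n - ua n)" for n
    using tx(2)[of n] unfolding tdec adec by (simp add: cis_cnj cis_mult[symmetric] algebra_simps) (simp add: cis_mult)
  have kp: "r n = r 1 \<and> ua n = ua 1 \<and> pb n = pb 1 \<and> tau n = tau 1" if "n \<ge> 1" for n
    using cp[OF that] by (simp add: r_def ua_def pb_def tau_def t_def a_def b_def x_def y_def)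
  have km: "r n = r (-1) \<and> ua n = ua (-1) \<and> pb n = pb (-1) \<and> tau n = tau (-1)" if "n \<le> -1" for n
    using cm[OF that] by (simp add: r_def ua_def pb_def tau_def t_def a_def b_def x_def y_def)
  define lam where "lam = tau (-1) / 2"
  define ta where "ta m = (if m \<le> -1 then of_int (m+1) * (lam - ua (-1))
       else (lam - ua 0) + of_int m * (lam - ua 1))" for m :: int
  define tb where "tb m = (if m \<le> -1 then ta m + ua (-1) - pb (-1) else if m = 0 then lam - pb (-1)
       else ta m + ua 1 - pb 1)" for m :: int
  define mu1 where "mu1 = pb 0 - pb (-1)"
  define mu2 where "mu2 = pb 1 + tau 0 - pb 0 - 2 * lam"
  define mu3 where "mu3 = tau 1 - 2 * lam"
  define W where "W n = Wf (ta n) (tb n) (A n) (B n)" for n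
  have KV0: "(cis E1 * a m, cis E2 * b m) =
     (of_real (r m) * cis (E1 + ua m), of_real (sval (r m)) * cis (E2 + pb m))" for E1 E2 m
    by (simp add: adec bdec cis_shuffle)
  have KW0: "(cis E1 * x m, cis E2 * y m) =
     (- (of_real (sval (r m)) * cis (E1 + tau m - pb m)), of_real (r m) * cis (E2 + tau m - ua m))" for E1 E2 m
    by (simp add: xdec ydec cis_shuffle algebra_simps)
  have KV: "vref (r 1) (r (-1)) (r 0) mu1 m = (cis (-lam - ta (m-1) + ta m) * a m, cis (-lam - ta (m-1) + tb m) * b m)" for m
  proof (cases "m \<le> -1")
    case True
    have e1: "-lam - ta (m-1) + ta m + ua m = 0" and e2: "-lam - ta (m-1) + tb m + pb m = 0"
      using km[OF True] True by (simp_all add: ta_def tb_def algebra_simps)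
    show ?thesis unfolding KV0 e1 e2 using km[OF True] True by (simp add: vref_def)
  next
    case f1: False
    show ?thesis
    proof (cases "m = 0")
      case True
      have e1: "-lam - ta (m-1) + ta m + ua m = 0" and e2: "-lam - ta (m-1) + tb m + pb m = mu1"
        using True by (simp_all add: ta_def tb_def mu1_def algebra_simps)
      show ?thesis unfolding KV0 e1 e2 using True by (simp add: vref_def cis_conv_exp mult.commute)
    next
      case False
      then have m1: "m \<ge> 1" using f1 by simp
      have e1: "-lam - ta (m-1) + ta m + ua m = 0" and e2: "-lam - ta (m-1) + tb m + pb m = 0"
        using kp[OF m1] m1 by (simp_all add: ta_def tb_def algebra_simps)
      show ?thesis unfolding KV0 e1 e2 using kp[OF m1] m1 by (simp add: vref_def)
    qed
  qed
  have KW: "wref (r 1) (r (-1)) (r 0) mu1 mu2 mu3 m = (cis (-lam - tb (m+1) + ta m) * x m, cis (-lam - tb (m+1) + tb m) * y m)" for m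
  proof -
    consider "m \<le> -2" | "m = -1" | "m = 0" | "m \<ge> 1" by linarith
    then show ?thesis
    proof cases
      case 1
      then have m: "m \<le> -1" "m + 1 \<le> -1" by simp_all
      have e1: "-lam - tb (m+1) + ta m + tau m - pb m = 0" and e2: "-lam - tb (m+1) + tb m + tau m - ua m = 0"
        using km[OF m(1)] m by (simp_all add: ta_def tb_def lam_def algebra_simps)
      show ?thesis unfolding KW0 e1 e2 using km[OF m(1)] m by (simp add: wref_def)
    next
      case 2
      have e1: "-lam - tb (m+1) + ta m + tau m - pb m = 0" and e2: "-lam - tb (m+1) + tb m + tau m - ua m = 0"
        using 2 by (simp_all add: ta_def tb_def lam_def algebra_simps)
      show ?thesis unfolding KW0 e1 e2 using 2 by (simp add: wref_def)
    next
      case 3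
      have e1: "-lam - tb (m+1) + ta m + tau m - pb m = mu2" and e2: "-lam - tb (m+1) + tb m + tau m - ua m = mu1 + mu2"
        using 3 by (simp_all add: ta_def tb_def mu1_def mu2_def algebra_simps)
      show ?thesis unfolding KW0 e1 e2 using 3 by (simp add: wref_def cis_conv_exp mult.commute)
    next
      case 4
      then have m: "m + 1 \<ge> 1" by simp
      have e1: "-lam - tb (m+1) + ta m + tau m - pb m = mu3" and e2: "-lam - tb (m+1) + tb m + tau m - ua m = mu3"
        using kp[OF 4] 4 by (simp_all add: ta_def tb_def mu3_def algebra_simps)
      show ?thesis unfolding KW0 e1 e2 using kp[OF 4] 4 by (simp add: wref_def cis_conv_exp mult.commute)
    qed
  qed
  have WU: "unitary2 (W n)" for n using Wf_unitary onb by (simp add: W_def)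
  have Winv: "inv (W n) = Wi (ta n) (tb n) (A n) (B n)" for n using Wf_inv onb by (simp add: W_def)
  have WC: "W n (C n) = (cis (ta n) * a n, cis (tb n) * b n)" for n by (simp add: W_def Wf_def a_def b_def)
  have WD: "W n (D n) = (cis (ta n) * x n, cis (tb n) * y n)" for n by (simp add: W_def Wf_def x_def y_def)
  have main: "(\<lambda>n. ssc (exp (\<i> * complex_of_real lam)) (W n (U (\<lambda>m. inv (W m) (f m)) n)))
      = Uref (r 1) (r (-1)) (r 0) mu1 mu2 mu3 f" if f: "f \<in> ell2" for f
  proof -
    define g where "g m = Wi (ta m) (tb m) (A m) (B m) (f m)" for m
    have Wg: "W m (g m) = f m" for m using Wf_Wi onb by (simp add: W_def g_def)
    have gi: "cinner (g m) (g m) = cinner (f m) (f m)" for m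
      using Wf_inner[of "A m" "B m" "ta m" "tb m" "g m" "g m"] onb Wg by (simp add: W_def)
    have gl: "g \<in> ell2" using f unfolding ell2_def normsq by (simp add: gi)
    have ginner: "cinner (E m) (g m) = cinner (W m (E m)) (f m)" for E m
      using Wf_inner[of "A m" "B m" "ta m" "tb m" "E m" "g m"] onb Wg by (simp add: W_def)
    have "(\<lambda>m. inv (W m) (f m)) = g" by (simp add: Winv g_def fun_eq_iff)
    then have Ug: "U (\<lambda>m. inv (W m) (f m)) = walk_repr A B C D g" using UW gl by simp
    show ?thesis
    proof
      fix n
      have "W n (walk_repr A B C D g n) = (cis (ta n) * cinner (C (n+1)) (g (n+1)), cis (tb n) * cinner (D (n-1)) (g (n-1)))"
        unfolding walk_repr_def W_def using Wf_comb onb by simp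
      then show "ssc (exp (\<i> * complex_of_real lam)) (W n (U (\<lambda>m. inv (W m) (f m)) n)) = Uref (r 1) (r (-1)) (r 0) mu1 mu2 mu3 f n"
        unfolding Ug ginner WC WD Uref_def KV KW
        by (simp add: ssc_def sadd_def e1_def e2_def cis_conv_exp[symmetric] combine1)
    qed
  qed
  show ?thesis
    unfolding unitary_equiv_def
    apply (rule exI[of _ "r 1"], rule exI[of _ "r (-1)"], rule exI[of _ "r 0"],
       rule exI[of _ mu1], rule exI[of _ mu2], rule exI[of _ mu3])
    using r01 WU main by blast
qed

end
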